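(* Let $f:\mathbb{Z}^n\to\mathbb{R}\cup\{+\infty\}$ be a function satisfying condition (SSQM$^\natural$). A vector $x^*\in\mathrm{dom}\,f$ is a minimizer of $f$ if and only if $$f(x^*-\chi_i+\chi_j)\ge f(x^* )\qquad\text{for all } i,j\in N\cup\{0\}.$$
   Context: $N=\{1,\dots,n\}$. For $i\in N$, $\chi_i\in\{0,1\}^n$ is the characteristic vector of $i$, and $\chi_0=0$. $\mathrm{dom}\,f=\{x\in\mathbb{Z}^n\mid f(x)<+\infty\}$. For $x,y\in\mathbb{Z}^n$, $\mathrm{supp}^+(x-y)=\{i\in N\mid x(i)>y(i)\}$ and $\mathrm{supp}^-(x-y)=\{j\in N\mid x(j)<y(j)\}$. Condition (SSQM$^\natural$): for all $x,y\in\mathrm{dom}\,f$ and all $i\in\mathrm{supp}^+(x-y)$ there exists $j\in\mathrm{supp}^-(x-y)\cup\{0\}$ such that at least one of the following holds: (a) $f(x-\chi_i+\chi_j)<f(x)$; (b) $f(y+\chi_i-\chi_j)<f(y)$; (c) $f(x-\chi_i+\chi_j)=f(x)$ and $f(y+\chi_i-\chi_j)=f(y)$. A function satisfying (SSQM$^\natural$) is called semi-strictly quasi M$^\natural$-convex. *)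

theory Defs
  imports "HOL-Library.Extended_Real" "HOL-Library.Function_Algebras"
begin

text \<open>Integer vectors in Z^n are functions from a finite index type 'n (playing the role
of N = {1..n}) to int. Index 0 of N \<union> {0} is represented by None, i in N by Some i.\<close>

definition chi :: "'n option \<Rightarrow> ('n::finite \<Rightarrow> int)" where
  "chi k = (case k of None \<Rightarrow> (\<lambda>_. 0) | Some i \<Rightarrow> (\<lambda>l. if l = i then 1 else 0))"

definition dom_f :: "(('n::finite \<Rightarrow> int) \<Rightarrow> ereal) \<Rightarrow> ('n \<Rightarrow> int) set" where
  "dom_f f = {x. f x < \<infinity>}"

definition supp_pos :: "('n::finite \<Rightarrow> int) \<Rightarrow> ('n \<Rightarrow> int) \<Rightarrow> 'n set" where
  "supp_pos x y = {i. x i > y i}"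

definition supp_neg :: "('n::finite \<Rightarrow> int) \<Rightarrow> ('n \<Rightarrow> int) \<Rightarrow> 'n set" where
  "supp_neg x y = {j. x j < y j}"

definition SSQM_nat :: "(('n::finite \<Rightarrow> int) \<Rightarrow> ereal) \<Rightarrow> bool" where
  "SSQM_nat f \<longleftrightarrow>
    (\<forall>x \<in> dom_f f. \<forall>y \<in> dom_f f. \<forall>i \<in> supp_pos x y.
       \<exists>j \<in> Some ` supp_neg x y \<union> {None}.
          f (x - chi (Some i) + chi j) < f x
        \<or> f (y + chi (Some i) - chi j) < f y
        \<or> (f (x - chi (Some i) + chi j) = f x \<and> f (y + chi (Some i) - chi j) = f y))"

definition is_minimizer :: "(('n::finite \<Rightarrow> int) \<Rightarrow> ereal) \<Rightarrow> ('n \<Rightarrow> int) \<Rightarrow> bool" where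
  "is_minimizer f x \<longleftrightarrow> x \<in> dom_f f \<and> (\<forall>y. f x \<le> f y)"

end

theory Submission
  imports Defs
begin

lemma chi_app: "chi (Some i) k = (if k = i then 1 else 0)" "chi None k = 0"
  by (simp_all add: chi_def)

lemma dist_dec1:
  fixes y xs :: "'n::finite \<Rightarrow> int"
  assumes "y i < xs i" "j = None \<or> (\<exists>j'. j = Some j' \<and> xs j' < y j')"
  shows "(\<Sum>k\<in>UNIV. \<bar>(y + chi (Some i) - chi j) k - xs k\<bar>) < (\<Sum>k\<in>UNIV. \<bar>y k - xs k\<bar>)"
proof (rule sum_strict_mono_ex1)
  show "finite (UNIV :: 'n set)" by simp
  show "\<forall>k\<in>UNIV. \<bar>(y + chi (Some i) - chi j) k - xs k\<bar> \<le> \<bar>y k - xs k\<bar>"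
    using assms by (auto simp: chi_app split: option.splits)
  show "\<exists>k\<in>UNIV. \<bar>(y + chi (Some i) - chi j) k - xs k\<bar> < \<bar>y k - xs k\<bar>"
    using assms by (intro bexI[of _ i]) (auto simp: chi_app split: option.splits)
qed

lemma dist_dec2:
  fixes y xs :: "'n::finite \<Rightarrow> int"
  assumes "xs i < y i"
  shows "(\<Sum>k\<in>UNIV. \<bar>(y - chi (Some i) + chi None) k - xs k\<bar>) < (\<Sum>k\<in>UNIV. \<bar>y k - xs k\<bar>)"
proof (rule sum_strict_mono_ex1)
  show "finite (UNIV :: 'n set)" by simp
  show "\<forall>k\<in>UNIV. \<bar>(y - chi (Some i) + chi None) k - xs k\<bar> \<le> \<bar>y k - xs k\<bar>"
    using assms by (auto simp: chi_app)
  show "\<exists>k\<in>UNIV. \<bar>(y - chi (Some i) + chi None) k - xs k\<bar> < \<bar>y k - xs k\<bar>"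
    using assms by (intro bexI[of _ i]) (auto simp: chi_app)
qed

theorem theorem2p3:
  fixes f :: "('n::finite \<Rightarrow> int) \<Rightarrow> ereal"
  assumes real_or_inf: "\<forall>x. f x \<noteq> -\<infinity>"
    and ssqm: "SSQM_nat f"
    and xdom: "xs \<in> dom_f f"
  shows "is_minimizer f xs \<longleftrightarrow>
           (\<forall>i j :: 'n option. f (xs - chi i + chi j) \<ge> f xs)"
proof
  assume "is_minimizer f xs" then show "\<forall>i j :: 'n option. f (xs - chi i + chi j) \<ge> f xs"
    by (simp add: is_minimizer_def)
next
  assume loc: "\<forall>i j :: 'n option. f (xs - chi i + chi j) \<ge> f xs"
  define d where "d = (\<lambda>y. nat (\<Sum>k\<in>UNIV. \<bar>y k - xs k\<bar>))"
  have dlt: "d z < d y" if "(\<Sum>k\<in>UNIV. \<bar>z k - xs k\<bar>) < (\<Sum>k\<in>UNIV. \<bar>y k - xs k\<bar>)" for z y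
    proof -
    have "0 \<le> (\<Sum>k\<in>UNIV. \<bar>z k - xs k\<bar>)" by (simp add: sum_nonneg)
    then show ?thesis using that unfolding d_def by linarith
  qed
  show "is_minimizer f xs"
  proof (rule ccontr)
    assume "\<not> is_minimizer f xs"
    then obtain y0 where "f y0 < f xs" using xdom by (auto simp: is_minimizer_def not_le)
    then obtain y where fy: "f y < f xs" and ymin: "\<And>z. f z < f xs \<Longrightarrow> d y \<le> d z"
      using ex_has_least_nat[of "\<lambda>y. f y < f xs" y0 d] by blast
    have ydom: "y \<in> dom_f f" using fy xdom by (auto simp: dom_f_def)
    show False
    proof (cases "\<exists>i. xs i > y i")
      case True
      then obtain i where i: "y i < xs i" by blast
      then have "i \<in> supp_pos xs y" by (simp add: supp_pos_def)
      with ssqm xdom ydom obtain j where j: "j \<in> Some ` supp_neg xs y \<union> {None}" and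
        alt: "f (xs - chi (Some i) + chi j) < f xs
        \<or> f (y + chi (Some i) - chi j) < f y
        \<or> (f (xs - chi (Some i) + chi j) = f xs \<and> f (y + chi (Some i) - chi j) = f y)"
        unfolding SSQM_nat_def by blast
      have "j = None \<or> (\<exists>j'. j = Some j' \<and> xs j' < y j')" using j by (auto simp: supp_neg_def)
      from dist_dec1[OF i this] have dd: "d (y + chi (Some i) - chi j) < d y" by (rule dlt)
      have "f (xs - chi (Some i) + chi j) \<ge> f xs" using loc by blast
      then have "f (y + chi (Some i) - chi j) < f xs" using alt fy by auto
      from ymin[OF this] dd show False by simp
    next
      case False
      have "y \<noteq> xs" using fy by auto
      then obtain i where "y i \<noteq> xs i" by auto
      with False have i: "xs i < y i" by (meson not_less_iff_gr_or_eq)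
      then have "i \<in> supp_pos y xs" by (simp add: supp_pos_def)
      with ssqm xdom ydom obtain j where j: "j \<in> Some ` supp_neg y xs \<union> {None}" and
        alt: "f (y - chi (Some i) + chi j) < f y
        \<or> f (xs + chi (Some i) - chi j) < f xs
        \<or> (f (y - chi (Some i) + chi j) = f y \<and> f (xs + chi (Some i) - chi j) = f xs)"
        unfolding SSQM_nat_def by blast
      have jn: "j = None" using j False by (auto simp: supp_neg_def)
      have dd: "d (y - chi (Some i) + chi None) < d y" by (rule dlt[OF dist_dec2[of xs i y, OF i]])
      have "f (xs - chi None + chi (Some i)) \<ge> f xs" using loc by blast
      moreover have "xs - chi None + chi (Some i) = xs + chi (Some i) - chi None"
        by (simp add: fun_eq_iff chi_app)
      ultimately have "f (y - chi (Some i) + chi None) < f xs" using alt fy jn by auto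
      from ymin[OF this] dd show False by simp
    qed
  qed
qed

end
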